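(* Let $P\in\{0,1\}^{k\times\ell}$ be a pattern with a row $r$ and two columns $c_1<c_2$ such that all 1-entries of $P$ in row $r$ lie in $\{r\}\times[c_1,c_2]$, and for every column $c$ with $c_1<c<c_2$, $P$ has no 1-entry in column $c$ except possibly $(r,c)$. Suppose moreover $P$ satisfies one of: Type 1: all 1-entries of $P$ above row $r$ lie in a single row $r_1<r$, and all 1-entries below row $r$ lie in a single row $r_2>r$; Type 2: all 1-entries above row $r$ lie in a single row $r_1<r$, and all 1-entries below row $r$ lie in $P[(r,k]\times[c_2,\ell]]$; Type 3: all 1-entries above row $r$ lie in $P[[1,r)\times[c_1]]$, and all 1-entries below row $r$ lie in $P[(r,k]\times[c_2,\ell]]$. Then every 1-entry of $P$ in $\{r\}\times[c_1,c_2]$ is row-bounding.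
   Context: All matrices are binary; rows numbered top to bottom, columns left to right; $(i,j)$ is the entry in row $i$, column $j$; $[a,b]=\{a,\dots,b\}$, $[a,b)=[a,b-1]$, $(a,b]=[a+1,b]$, $[n]=[1,n]$; $P[R\times C]$ is the submatrix on rows $R$ and columns $C$. $M\Delta f$ is $M$ with the value of entry $f$ switched. An embedding of $P\in\{0,1\}^{k\times\ell}$ into $M\in\{0,1\}^{m\times n}$ is a map $\phi:[k]\times[\ell]\to[m]\times[n]$ sending 1-entries to 1-entries such that if $e_1=(i_1,j_1)$, $e_2=(i_2,j_2)$ map to $(i_1^*,j_1^* )$, $(i_2^*,j_2^* )$, then $i_1<i_2\Rightarrow i_1^*<i_2^*$ and $j_1<j_2\Rightarrow j_1^*<j_2^*$. $M$ avoids $P$ if no embedding exists; $\mathrm{Av}(P)$ is the set of $P$-avoiding matrices. For a 1-entry $e$ of $P$ and $M\in\mathrm{Av}(P)$, a 0-entry $f$ of $M$ is critical for $e$ if some embedding of $P$ into $M\Delta f$ maps $e$ to $f$; a horizontal 0-run (maximal run of consecutive 0-entries in a row) is critical for $e$ if it contains a 0-entry critical for $e$. $e$ is row-bounding if there is a constant $K$ such that for every $M\in\mathrm{Av}(P)$ every row of $M$ contains at most $K$ horizontal 0-runs critical for $e$. *)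

theory Defs
  imports Main
begin

text \<open>A binary matrix with m rows and n columns is represented by its dimensions
together with a predicate A :: nat => nat => bool, where A i j means that entry (i,j)
(1-based, i in [1,m], j in [1,n]) is a 1-entry. Values outside the range are irrelevant.\<close>

type_synonym bmat = "nat \<Rightarrow> nat \<Rightarrow> bool"

definition cells :: "nat \<Rightarrow> nat \<Rightarrow> (nat \<times> nat) set" where
  "cells m n = {1..m} \<times> {1..n}"

definition is_embedding ::
  "bmat \<Rightarrow> nat \<Rightarrow> nat \<Rightarrow> bmat \<Rightarrow> nat \<Rightarrow> nat \<Rightarrow> (nat \<times> nat \<Rightarrow> nat \<times> nat) \<Rightarrow> bool" where
  "is_embedding P k l M m n \<phi> \<longleftrightarrow>
     (\<forall>e\<in>cells k l. \<phi> e \<in> cells m n) \<and>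
     (\<forall>(i,j)\<in>cells k l. P i j \<longrightarrow> M (fst (\<phi> (i,j))) (snd (\<phi> (i,j)))) \<and>
     (\<forall>e1\<in>cells k l. \<forall>e2\<in>cells k l. fst e1 < fst e2 \<longrightarrow> fst (\<phi> e1) < fst (\<phi> e2)) \<and>
     (\<forall>e1\<in>cells k l. \<forall>e2\<in>cells k l. snd e1 < snd e2 \<longrightarrow> snd (\<phi> e1) < snd (\<phi> e2))"

definition avoids :: "bmat \<Rightarrow> nat \<Rightarrow> nat \<Rightarrow> bmat \<Rightarrow> nat \<Rightarrow> nat \<Rightarrow> bool" where
  "avoids P k l M m n \<longleftrightarrow> \<not> (\<exists>\<phi>. is_embedding P k l M m n \<phi>)"

definition flip :: "bmat \<Rightarrow> nat \<times> nat \<Rightarrow> bmat" where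
  "flip M f = (\<lambda>i j. if (i, j) = f then \<not> M i j else M i j)"

definition critical ::
  "bmat \<Rightarrow> nat \<Rightarrow> nat \<Rightarrow> nat \<times> nat \<Rightarrow> bmat \<Rightarrow> nat \<Rightarrow> nat \<Rightarrow> nat \<times> nat \<Rightarrow> bool" where
  "critical P k l e M m n f \<longleftrightarrow>
     f \<in> cells m n \<and> \<not> M (fst f) (snd f) \<and>
     (\<exists>\<phi>. is_embedding P k l (flip M f) m n \<phi> \<and> \<phi> e = f)"

definition zero_run :: "bmat \<Rightarrow> nat \<Rightarrow> nat \<Rightarrow> nat \<Rightarrow> nat \<Rightarrow> nat \<Rightarrow> bool" where
  "zero_run M m n i a b \<longleftrightarrow>
     1 \<le> i \<and> i \<le> m \<and> 1 \<le> a \<and> a \<le> b \<and> b \<le> n \<and>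
     (\<forall>j\<in>{a..b}. \<not> M i j) \<and>
     (a = 1 \<or> M i (a - 1)) \<and> (b = n \<or> M i (b + 1))"

definition critical_runs ::
  "bmat \<Rightarrow> nat \<Rightarrow> nat \<Rightarrow> nat \<times> nat \<Rightarrow> bmat \<Rightarrow> nat \<Rightarrow> nat \<Rightarrow> nat \<Rightarrow> (nat \<times> nat) set" where
  "critical_runs P k l e M m n i =
     {(a, b). zero_run M m n i a b \<and> (\<exists>j\<in>{a..b}. critical P k l e M m n (i, j))}"

definition row_bounding :: "bmat \<Rightarrow> nat \<Rightarrow> nat \<Rightarrow> nat \<times> nat \<Rightarrow> bool" where
  "row_bounding P k l e \<longleftrightarrow>
     (\<exists>K::nat. \<forall>M m n. avoids P k l M m n \<longrightarrow>
        (\<forall>i\<in>{1..m}. card (critical_runs P k l e M m n i) \<le> K))"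

end

theory Submission
  imports Defs
begin

lemma embD:
  assumes "is_embedding P k l M m n \<phi>"
  shows emb_range: "\<And>e. e \<in> cells k l \<Longrightarrow> \<phi> e \<in> cells m n"
    and emb_one: "\<And>a b. (a,b) \<in> cells k l \<Longrightarrow> P a b \<Longrightarrow> M (fst (\<phi> (a,b))) (snd (\<phi> (a,b)))"
    and emb_row: "\<And>e1 e2. e1 \<in> cells k l \<Longrightarrow> e2 \<in> cells k l \<Longrightarrow> fst e1 < fst e2 \<Longrightarrow> fst (\<phi> e1) < fst (\<phi> e2)"
    and emb_col: "\<And>e1 e2. e1 \<in> cells k l \<Longrightarrow> e2 \<in> cells k l \<Longrightarrow> snd e1 < snd e2 \<Longrightarrow> snd (\<phi> e1) < snd (\<phi> e2)"
  using assms unfolding is_embedding_def by auto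

lemma embI:
  assumes "\<And>e. e \<in> cells k l \<Longrightarrow> \<phi> e \<in> cells m n"
   "\<And>a b. (a,b) \<in> cells k l \<Longrightarrow> P a b \<Longrightarrow> M (fst (\<phi> (a,b))) (snd (\<phi> (a,b)))"
   "\<And>a b a' b'. (a,b) \<in> cells k l \<Longrightarrow> (a',b') \<in> cells k l \<Longrightarrow> a < a' \<Longrightarrow> fst (\<phi> (a,b)) < fst (\<phi> (a',b'))"
   "\<And>a b a' b'. (a,b) \<in> cells k l \<Longrightarrow> (a',b') \<in> cells k l \<Longrightarrow> b < b' \<Longrightarrow> snd (\<phi> (a,b)) < snd (\<phi> (a',b'))"
  shows "is_embedding P k l M m n \<phi>"
  using assms unfolding is_embedding_def by auto

lemma flip_other: "(p,q) \<noteq> f \<Longrightarrow> flip M f p q = M p q"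
  by (simp add: flip_def)

lemma emb_ne:
  assumes emb: "is_embedding P k l M m n \<phi>" and "(a,b) \<in> cells k l" "(r,j0) \<in> cells k l"
    and "(a,b) \<noteq> (r,j0)"
  shows "\<phi> (a,b) \<noteq> \<phi> (r,j0)"
proof
  assume eq: "\<phi> (a,b) = \<phi> (r,j0)"
  consider "a < r" | "r < a" | "a = r" "b < j0" | "a = r" "j0 < b" using assms(4) by fastforce
  then show False
  proof cases
    case 1 then show ?thesis using emb_row[OF emb, of "(a,b)" "(r,j0)"] assms eq by auto
  next
    case 2 then show ?thesis using emb_row[OF emb, of "(r,j0)" "(a,b)"] assms eq by auto
  next
    case 3 then show ?thesis using emb_col[OF emb, of "(a,b)" "(r,j0)"] assms eq by auto
  next
    case 4 then show ?thesis using emb_col[OF emb, of "(r,j0)" "(a,b)"] assms eq by auto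
  qed
qed

lemma replace_emb:
  assumes emb: "is_embedding P k l (flip M (i,x)) m n \<phi>"
    and e: "(r,j0) \<in> cells k l" and phie: "\<phi> (r,j0) = (i,x)"
    and My: "M i y" and y: "1 \<le> y" "y \<le> n"
    and left: "\<And>a b. (a,b) \<in> cells k l \<Longrightarrow> b < j0 \<Longrightarrow> snd (\<phi> (a,b)) < y"
    and right: "\<And>a b. (a,b) \<in> cells k l \<Longrightarrow> j0 < b \<Longrightarrow> y < snd (\<phi> (a,b))"
  shows "is_embedding P k l M m n (\<phi>((r,j0) := (i,y)))"
proof (rule embI)
  have i: "1 \<le> i" "i \<le> m" using emb_range[OF emb e] phie by (auto simp: cells_def)
  have fstq: "\<And>e. fst ((\<phi>((r,j0) := (i,y))) e) = fst (\<phi> e)" using phie by auto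
  show "\<And>e. e \<in> cells k l \<Longrightarrow> (\<phi>((r,j0) := (i,y))) e \<in> cells m n"
  proof -
    fix e assume "e \<in> cells k l"
    then show "(\<phi>((r,j0) := (i,y))) e \<in> cells m n"
      using emb_range[OF emb, of e] i y by (auto simp: cells_def)
  qed
  show "\<And>a b a' b'. (a,b) \<in> cells k l \<Longrightarrow> (a',b') \<in> cells k l \<Longrightarrow> a < a' \<Longrightarrow>
     fst ((\<phi>((r,j0) := (i,y))) (a,b)) < fst ((\<phi>((r,j0) := (i,y))) (a',b'))"
    unfolding fstq using emb_row[OF emb] by auto
  show "\<And>a b. (a,b) \<in> cells k l \<Longrightarrow> P a b \<Longrightarrow> M (fst ((\<phi>((r,j0) := (i,y))) (a,b))) (snd ((\<phi>((r,j0) := (i,y))) (a,b)))"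
  proof -
    fix a b assume ab: "(a,b) \<in> cells k l" "P a b"
    show "M (fst ((\<phi>((r,j0) := (i,y))) (a,b))) (snd ((\<phi>((r,j0) := (i,y))) (a,b)))"
    proof (cases "(a,b) = (r,j0)")
      case True then show ?thesis using My by auto
    next
      case False
      have ne: "\<phi> (a,b) \<noteq> (i,x)" using emb_ne[OF emb ab(1) e False] phie by simp
      have "flip M (i,x) (fst (\<phi> (a,b))) (snd (\<phi> (a,b)))" using emb_one[OF emb ab] .
      then have "M (fst (\<phi> (a,b))) (snd (\<phi> (a,b)))" using flip_other[of "fst (\<phi> (a,b))" "snd (\<phi> (a,b))" "(i,x)" M] ne
        by (metis prod.collapse)
      then show ?thesis using False by auto
    qed
  qed
  show "\<And>a b a' b'. (a,b) \<in> cells k l \<Longrightarrow> (a',b') \<in> cells k l \<Longrightarrow> b < b' \<Longrightarrow>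
     snd ((\<phi>((r,j0) := (i,y))) (a,b)) < snd ((\<phi>((r,j0) := (i,y))) (a',b'))"
  proof -
    fix a b a' b' assume c: "(a,b) \<in> cells k l" "(a',b') \<in> cells k l" "b < b'"
    have o: "snd (\<phi> (a,b)) < snd (\<phi> (a',b'))" using emb_col[OF emb, of "(a,b)" "(a',b')"] c by auto
    show "snd ((\<phi>((r,j0) := (i,y))) (a,b)) < snd ((\<phi>((r,j0) := (i,y))) (a',b'))"
    proof (cases "(a,b) = (r,j0)")
      case True
      then have "(a',b') \<noteq> (r,j0)" "j0 < b'" using c by auto
      then show ?thesis using True right[OF c(2)] by simp
    next
      case False
      show ?thesis
      proof (cases "(a',b') = (r,j0)")
        case True
        then have "b < j0" using c by auto
        then show ?thesis using True False left[OF c(1)] by simp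
      next
        case False2: False
        then show ?thesis using False o by auto
      qed
    qed
  qed
qed

lemma gap_right:
  assumes emb: "is_embedding P k l (flip M (i,x)) m n \<phi>"
    and e: "(r,j0) \<in> cells k l" and phie: "\<phi> (r,j0) = (i,x)"
    and av: "avoids P k l M m n"
    and My: "M i y" and y: "1 \<le> y" "y \<le> n" and xy: "x < y"
  shows "\<forall>a b. (a,b) \<in> cells k l \<longrightarrow> b \<le> j0 \<longrightarrow> snd (\<phi> (a,b)) < y"
proof (rule ccontr)
  assume "\<not> ?thesis"
  then obtain a0 b0 where c0: "(a0,b0) \<in> cells k l" "b0 \<le> j0" "y \<le> snd (\<phi> (a0,b0))" by auto
  have "is_embedding P k l M m n (\<phi>((r,j0) := (i,y)))"
  proof (rule replace_emb[OF emb e phie My y])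
    fix a b assume h: "(a,b) \<in> cells k l" "b < j0"
    then have "snd (\<phi> (a,b)) < snd (\<phi> (r,j0))" using emb_col[OF emb, of "(a,b)" "(r,j0)"] e by auto
    then show "snd (\<phi> (a,b)) < y" using phie xy by simp
  next
    fix a b assume h: "(a,b) \<in> cells k l" "j0 < b"
    then have "snd (\<phi> (a0,b0)) < snd (\<phi> (a,b))" using emb_col[OF emb, of "(a0,b0)" "(a,b)"] c0 by auto
    then show "y < snd (\<phi> (a,b))" using c0 by simp
  qed
  then show False using av unfolding avoids_def by blast
qed

lemma gap_left:
  assumes emb: "is_embedding P k l (flip M (i,x)) m n \<phi>"
    and e: "(r,j0) \<in> cells k l" and phie: "\<phi> (r,j0) = (i,x)"
    and av: "avoids P k l M m n"
    and My: "M i y" and y: "1 \<le> y" "y \<le> n" and xy: "y < x"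
  shows "\<forall>a b. (a,b) \<in> cells k l \<longrightarrow> j0 \<le> b \<longrightarrow> y < snd (\<phi> (a,b))"
proof (rule ccontr)
  assume "\<not> ?thesis"
  then obtain a0 b0 where c0: "(a0,b0) \<in> cells k l" "j0 \<le> b0" "snd (\<phi> (a0,b0)) \<le> y" by auto
  have "is_embedding P k l M m n (\<phi>((r,j0) := (i,y)))"
  proof (rule replace_emb[OF emb e phie My y])
    fix a b assume h: "(a,b) \<in> cells k l" "b < j0"
    then have "snd (\<phi> (a,b)) < snd (\<phi> (a0,b0))" using emb_col[OF emb, of "(a,b)" "(a0,b0)"] c0 by auto
    then show "snd (\<phi> (a,b)) < y" using c0 by simp
  next
    fix a b assume h: "(a,b) \<in> cells k l" "j0 < b"
    then have "snd (\<phi> (r,j0)) < snd (\<phi> (a,b))" using emb_col[OF emb, of "(r,j0)" "(a,b)"] e by auto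
    then show "y < snd (\<phi> (a,b))" using phie xy by simp
  qed
  then show False using av unfolding avoids_def by blast
qed

lemma zr_order:
  assumes "zero_run M m n i a b" "zero_run M m n i a' b'" "a < a'"
  shows "b + 1 < a' \<and> M i (b+1)"
proof -
  have z: "\<forall>j\<in>{a..b}. \<not> M i j" "\<forall>j\<in>{a'..b'}. \<not> M i j" "1 \<le> a" "a' \<le> b'" "b' \<le> n"
    "a' = 1 \<or> M i (a' - 1)" "b = n \<or> M i (b + 1)" "a \<le> b"
    using assms unfolding zero_run_def by auto
  have "M i (a' - 1)" using z assms(3) by auto
  have ba: "b < a'"
  proof (rule ccontr)
    assume "\<not> b < a'"
    then have "a' - 1 \<in> {a..b}" using assms(3) by auto
    then show False using z(1) \<open>M i (a' - 1)\<close> by blast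
  qed
  then have "M i (b+1)" using z by auto
  moreover have "b + 1 \<noteq> a'" using z(2) z(4) calculation by auto
  ultimately show ?thesis using ba by auto
qed

lemma zr_uniq:
  assumes "zero_run M m n i a b" "zero_run M m n i a b'"
  shows "b = b'"
proof (rule ccontr)
  have z: "\<forall>j\<in>{a..b}. \<not> M i j" "\<forall>j\<in>{a..b'}. \<not> M i j" "b \<le> n" "b' \<le> n"
    "b = n \<or> M i (b + 1)" "b' = n \<or> M i (b' + 1)" "a \<le> b" "a \<le> b'"
    using assms unfolding zero_run_def by auto
  assume "b \<noteq> b'"
  then consider "b < b'" | "b' < b" by linarith
  then show False
  proof cases
    case 1 then show ?thesis using z by (metis atLeastAtMost_iff le_add1 less_le_trans not_less Suc_eq_plus1 Suc_leI order.trans)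
  next
    case 2 then show ?thesis using z by (metis atLeastAtMost_iff le_add1 less_le_trans not_less Suc_eq_plus1 Suc_leI order.trans)
  qed
qed


lemma construct:
  assumes c: "c1 < c2"
    and j0: "c1 \<le> j0" "j0 \<le> c2"
    and row_r: "\<forall>j\<in>{1..l}. P r j \<longrightarrow> c1 \<le> j \<and> j \<le> c2"
    and mid_cols: "\<forall>a\<in>{1..k}. \<forall>c\<in>{c1<..<c2}. P a c \<longrightarrow> a = r"
    and es: "is_embedding P k l (flip M (i,xs)) m n \<phi>s" "\<phi>s (r,j0) = (i,xs)"
    and et: "is_embedding P k l (flip M (i,xt)) m n \<phi>t" "\<phi>t (r,j0) = (i,xt)"
    and e: "(r,j0) \<in> cells k l"
    and Y1: "\<And>b. c1 \<le> b \<Longrightarrow> b \<le> c2 \<Longrightarrow> M i (Y b) \<and> 1 \<le> Y b \<and> Y b \<le> n"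
    and Ymono: "\<And>b b'. c1 \<le> b \<Longrightarrow> b < b' \<Longrightarrow> b' \<le> c2 \<Longrightarrow> Y b < Y b'"
    and A1: "\<And>a b. (a,b) \<in> cells k l \<Longrightarrow> b \<le> j0 \<Longrightarrow> snd (\<phi>s (a,b)) < Y c1"
    and A2: "\<And>a b. (a,b) \<in> cells k l \<Longrightarrow> j0 \<le> b \<Longrightarrow> Y c2 < snd (\<phi>t (a,b))"
    and U1: "\<And>a b. (a,b) \<in> cells k l \<Longrightarrow> a < r \<Longrightarrow> 1 \<le> U a b \<and> U a b < i"
    and U2: "\<And>a b a' b'. (a,b) \<in> cells k l \<Longrightarrow> (a',b') \<in> cells k l \<Longrightarrow> a < a' \<Longrightarrow> a' < r \<Longrightarrow> U a b < U a' b'"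
    and U4: "\<And>a b. (a,b) \<in> cells k l \<Longrightarrow> P a b \<Longrightarrow> a < r \<Longrightarrow> (b \<le> c1 \<longrightarrow> U a b = fst (\<phi>s (a,b))) \<and> (c2 \<le> b \<longrightarrow> U a b = fst (\<phi>t (a,b)))"
    and D1: "\<And>a b. (a,b) \<in> cells k l \<Longrightarrow> r < a \<Longrightarrow> i < D a b \<and> D a b \<le> m"
    and D2: "\<And>a b a' b'. (a,b) \<in> cells k l \<Longrightarrow> (a',b') \<in> cells k l \<Longrightarrow> a < a' \<Longrightarrow> r < a \<Longrightarrow> D a b < D a' b'"
    and D4: "\<And>a b. (a,b) \<in> cells k l \<Longrightarrow> P a b \<Longrightarrow> r < a \<Longrightarrow> (b \<le> c1 \<longrightarrow> D a b = fst (\<phi>s (a,b))) \<and> (c2 \<le> b \<longrightarrow> D a b = fst (\<phi>t (a,b)))"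
  shows "\<exists>\<psi>. is_embedding P k l M m n \<psi>"
proof -
  have i: "1 \<le> i" "i \<le> m" using emb_range[OF es(1) e] es(2) by (auto simp: cells_def)
  define ROW where "ROW a b = (if a = r then i else if a < r then U a b else D a b)" for a b
  define COL where "COL a b = (if b < c1 \<or> (b = c1 \<and> a \<noteq> r) then snd (\<phi>s (a,b))
      else if c2 < b \<or> (b = c2 \<and> a \<noteq> r) then snd (\<phi>t (a,b)) else Y b)" for a b
  have Ylo: "Y c1 \<le> Y b" if "c1 \<le> b" "b \<le> c2" for b
    using Ymono[of c1 b] that by (cases "b = c1") auto
  have Yhi: "Y b \<le> Y c2" if "c1 \<le> b" "b \<le> c2" for b
    using Ymono[of b c2] that by (cases "b = c2") auto
  have R4: "ROW a b = fst (\<phi>s (a,b)) \<and> COL a b = snd (\<phi>s (a,b)) \<or> ROW a b = fst (\<phi>t (a,b)) \<and> COL a b = snd (\<phi>t (a,b))"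
    if ab: "(a,b) \<in> cells k l" "P a b" "a \<noteq> r" for a b
  proof -
    have "b \<notin> {c1<..<c2}" using mid_cols ab by (fastforce simp: cells_def)
    then have "b \<le> c1 \<or> c2 \<le> b" by auto
    then show ?thesis
    proof
      assume b: "b \<le> c1"
      then have "COL a b = snd (\<phi>s (a,b))" using ab(3) unfolding COL_def by auto
      moreover have "ROW a b = fst (\<phi>s (a,b))"
        using U4[OF ab(1,2)] D4[OF ab(1,2)] ab(3) b unfolding ROW_def by (cases "a < r") auto
      ultimately show ?thesis by simp
    next
      assume b: "c2 \<le> b"
      then have "COL a b = snd (\<phi>t (a,b))" using ab(3) c unfolding COL_def by auto
      moreover have "ROW a b = fst (\<phi>t (a,b))"
        using U4[OF ab(1,2)] D4[OF ab(1,2)] ab(3) b unfolding ROW_def by (cases "a < r") auto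
      ultimately show ?thesis by simp
    qed
  qed
  have sclass: "COL a b < Y c1" if "(a,b) \<in> cells k l" "b < c1 \<or> (b = c1 \<and> a \<noteq> r)" for a b
    using that A1[OF that(1)] j0 unfolding COL_def by auto
  have tclass: "Y c2 < COL a b" if "(a,b) \<in> cells k l" "\<not> (b < c1 \<or> (b = c1 \<and> a \<noteq> r))" "c2 < b \<or> (b = c2 \<and> a \<noteq> r)" for a b
    using that A2[OF that(1)] j0 unfolding COL_def by auto
  have yclass: "COL a b = Y b \<and> c1 \<le> b \<and> b \<le> c2" if "\<not> (b < c1 \<or> (b = c1 \<and> a \<noteq> r))" "\<not> (c2 < b \<or> (b = c2 \<and> a \<noteq> r))" for a b
    using that c unfolding COL_def by auto
  show ?thesis
  proof (rule exI, rule embI)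
    fix ee assume ee: "ee \<in> cells k l"
    obtain a b where ab: "ee = (a,b)" by fastforce
    have rs: "\<phi>s (a,b) \<in> cells m n" "\<phi>t (a,b) \<in> cells m n"
      using emb_range[OF es(1)] emb_range[OF et(1)] ee ab by auto
    have "1 \<le> ROW a b \<and> ROW a b \<le> m"
      using U1[of a b] D1[of a b] ee ab i i unfolding ROW_def by (auto simp: not_less)
    moreover have "1 \<le> COL a b \<and> COL a b \<le> n"
    proof (cases "b < c1 \<or> (b = c1 \<and> a \<noteq> r)")
      case True then show ?thesis using rs unfolding COL_def by (auto simp: cells_def)
    next
      case False
      show ?thesis
      proof (cases "c2 < b \<or> (b = c2 \<and> a \<noteq> r)")
        case True then show ?thesis using rs False unfolding COL_def by (auto simp: cells_def)
      next
        case F2: False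
        then show ?thesis using yclass[OF False F2] Y1 by auto
      qed
    qed
    ultimately show "(\<lambda>(a,b). (ROW a b, COL a b)) ee \<in> cells m n" using ab by (auto simp: cells_def)
  next
    fix a b assume ab: "(a,b) \<in> cells k l" "P a b"
    show "M (fst ((\<lambda>(a,b). (ROW a b, COL a b)) (a,b))) (snd ((\<lambda>(a,b). (ROW a b, COL a b)) (a,b)))"
    proof (cases "a = r")
      case True
      then have "c1 \<le> b" "b \<le> c2" using row_r ab by (auto simp: cells_def)
      then have "ROW a b = i" "COL a b = Y b" using True unfolding ROW_def COL_def by auto
      then show ?thesis using Y1 \<open>c1 \<le> b\<close> \<open>b \<le> c2\<close> by simp
    next
      case False
      have nes: "\<phi>s (a,b) \<noteq> (i,xs)" using emb_ne[OF es(1) ab(1) e] False es(2) by auto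
      have net: "\<phi>t (a,b) \<noteq> (i,xt)" using emb_ne[OF et(1) ab(1) e] False et(2) by auto
      have ms: "M (fst (\<phi>s (a,b))) (snd (\<phi>s (a,b)))"
        using emb_one[OF es(1) ab] flip_other[of "fst (\<phi>s (a,b))" "snd (\<phi>s (a,b))" "(i,xs)" M] nes
        by (metis prod.collapse)
      have mt: "M (fst (\<phi>t (a,b))) (snd (\<phi>t (a,b)))"
        using emb_one[OF et(1) ab] flip_other[of "fst (\<phi>t (a,b))" "snd (\<phi>t (a,b))" "(i,xt)" M] net
        by (metis prod.collapse)
      show ?thesis using R4[OF ab False] ms mt by auto
    qed
  next
    fix a b a' b' assume h: "(a,b) \<in> cells k l" "(a',b') \<in> cells k l" "a < a'"
    have "ROW a b < ROW a' b'"
    proof -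
      consider "a < r" "a' < r" | "a < r" "a' = r" | "a < r" "r < a'" | "a = r" "r < a'" | "r < a" "r < a'"
        using h(3) by linarith
      then show ?thesis
      proof cases
        case 1 then show ?thesis using U2[OF h] unfolding ROW_def by auto
      next
        case 2 then show ?thesis using U1[OF h(1)] unfolding ROW_def by auto
      next
        case 3 then show ?thesis using U1[OF h(1)] D1[OF h(2)] unfolding ROW_def by auto
      next
        case 4 then show ?thesis using D1[OF h(2)] unfolding ROW_def by auto
      next
        case 5 then show ?thesis using D2[OF h] unfolding ROW_def by auto
      qed
    qed
    then show "fst ((\<lambda>(a,b). (ROW a b, COL a b)) (a,b)) < fst ((\<lambda>(a,b). (ROW a b, COL a b)) (a',b'))" by simp
  next
    fix a b a' b' assume h: "(a,b) \<in> cells k l" "(a',b') \<in> cells k l" "b < b'"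
    have "COL a b < COL a' b'"
    proof (cases "b < c1 \<or> (b = c1 \<and> a \<noteq> r)")
      case S: True
      show ?thesis
      proof (cases "b' < c1 \<or> (b' = c1 \<and> a' \<noteq> r)")
        case True
        then show ?thesis using S emb_col[OF es(1), of "(a,b)" "(a',b')"] h unfolding COL_def by auto
      next
        case S': False
        show ?thesis
        proof (cases "c2 < b' \<or> (b' = c2 \<and> a' \<noteq> r)")
          case True
          then show ?thesis using sclass[OF h(1) S] tclass[OF h(2) S' True] Ylo[of c2] c by auto
        next
          case False
          then show ?thesis using sclass[OF h(1) S] yclass[OF S' False] Ylo by fastforce
        qed
      qed
    next
      case S: False
      have S': "\<not> (b' < c1 \<or> (b' = c1 \<and> a' \<noteq> r))" using S h(3) by auto
      show ?thesis
      proof (cases "c2 < b \<or> (b = c2 \<and> a \<noteq> r)")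
        case T: True
        then have T': "c2 < b' \<or> (b' = c2 \<and> a' \<noteq> r)" using h(3) by auto
        then show ?thesis using S S' T emb_col[OF et(1), of "(a,b)" "(a',b')"] h unfolding COL_def by auto
      next
        case T: False
        show ?thesis
        proof (cases "c2 < b' \<or> (b' = c2 \<and> a' \<noteq> r)")
          case True
          then show ?thesis using yclass[OF S T] tclass[OF h(2) S' True] Yhi by fastforce
        next
          case False
          then show ?thesis using yclass[OF S T] yclass[OF S' False] Ymono h(3) by auto
        qed
      qed
    qed
    then show "snd ((\<lambda>(a,b). (ROW a b, COL a b)) (a,b)) < snd ((\<lambda>(a,b). (ROW a b, COL a b)) (a',b'))" by simp
  qed
qed


definition mixrow :: "(nat\<times>nat \<Rightarrow> nat\<times>nat) \<Rightarrow> (nat\<times>nat \<Rightarrow> nat\<times>nat) \<Rightarrow> nat \<Rightarrow> nat \<Rightarrow> nat \<Rightarrow> nat \<Rightarrow> nat" where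
 "mixrow ps pt c1 q a b = (if a = q then (if b \<le> c1 then fst (ps (a,b)) else fst (pt (a,b)))
    else if a < q then min (fst (ps (a,b))) (fst (pt (a,b))) else max (fst (ps (a,b))) (fst (pt (a,b))))"

lemma mixrow_cases: "mixrow ps pt c1 q a b = fst (ps (a,b)) \<or> mixrow ps pt c1 q a b = fst (pt (a,b))"
  by (auto simp: mixrow_def min_def max_def)

lemma mixrow_mono:
  assumes "fst (ps (a,b)) < fst (ps (a',b'))" "fst (pt (a,b)) < fst (pt (a',b'))" "a < a'"
  shows "mixrow ps pt c1 q a b < mixrow ps pt c1 q a' b'"
  using assms by (auto simp: mixrow_def min_def max_def)

lemma mixrow_q: "c1 < c2 \<Longrightarrow> (b \<le> c1 \<longrightarrow> mixrow ps pt c1 q q b = fst (ps (q,b))) \<and> (c2 \<le> b \<longrightarrow> mixrow ps pt c1 q q b = fst (pt (q,b)))"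
  by (auto simp: mixrow_def)


lemma combine:
  assumes c: "c1 < c2"
    and j0: "c1 \<le> j0" "j0 \<le> c2"
    and row_r: "\<forall>j\<in>{1..l}. P r j \<longrightarrow> c1 \<le> j \<and> j \<le> c2"
    and mid_cols: "\<forall>a\<in>{1..k}. \<forall>c\<in>{c1<..<c2}. P a c \<longrightarrow> a = r"
    and types:
      "(\<exists>r1 r2. (\<forall>(i,j)\<in>cells k l. P i j \<and> i < r \<longrightarrow> i = r1) \<and>
                (\<forall>(i,j)\<in>cells k l. P i j \<and> r < i \<longrightarrow> i = r2))
       \<or> (\<exists>r1. (\<forall>(i,j)\<in>cells k l. P i j \<and> i < r \<longrightarrow> i = r1) \<and>
                (\<forall>(i,j)\<in>cells k l. P i j \<and> r < i \<longrightarrow> c2 \<le> j))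
       \<or> ((\<forall>(i,j)\<in>cells k l. P i j \<and> i < r \<longrightarrow> j \<le> c1) \<and>
          (\<forall>(i,j)\<in>cells k l. P i j \<and> r < i \<longrightarrow> c2 \<le> j))"
    and es: "is_embedding P k l (flip M (i,xs)) m n \<phi>s" "\<phi>s (r,j0) = (i,xs)"
    and et: "is_embedding P k l (flip M (i,xt)) m n \<phi>t" "\<phi>t (r,j0) = (i,xt)"
    and e: "(r,j0) \<in> cells k l"
    and Y1: "\<And>b. c1 \<le> b \<Longrightarrow> b \<le> c2 \<Longrightarrow> M i (Y b) \<and> 1 \<le> Y b \<and> Y b \<le> n"
    and Ymono: "\<And>b b'. c1 \<le> b \<Longrightarrow> b < b' \<Longrightarrow> b' \<le> c2 \<Longrightarrow> Y b < Y b'"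
    and A1: "\<And>a b. (a,b) \<in> cells k l \<Longrightarrow> b \<le> j0 \<Longrightarrow> snd (\<phi>s (a,b)) < Y c1"
    and A2: "\<And>a b. (a,b) \<in> cells k l \<Longrightarrow> j0 \<le> b \<Longrightarrow> Y c2 < snd (\<phi>t (a,b))"
  shows "\<exists>\<psi>. is_embedding P k l M m n \<psi>"
proof -
  note C = construct[OF c j0 row_r mid_cols es et e Y1 Ymono A1 A2]
  have su: "1 \<le> fst (\<phi>s (a,b)) \<and> fst (\<phi>s (a,b)) < i" if "(a,b) \<in> cells k l" "a < r" for a b
    using emb_row[OF es(1), of "(a,b)" "(r,j0)"] emb_range[OF es(1) that(1)] that e es(2) by (auto simp: cells_def)
  have tu: "1 \<le> fst (\<phi>t (a,b)) \<and> fst (\<phi>t (a,b)) < i" if "(a,b) \<in> cells k l" "a < r" for a b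
    using emb_row[OF et(1), of "(a,b)" "(r,j0)"] emb_range[OF et(1) that(1)] that e et(2) by (auto simp: cells_def)
  have sd: "i < fst (\<phi>s (a,b)) \<and> fst (\<phi>s (a,b)) \<le> m" if "(a,b) \<in> cells k l" "r < a" for a b
    using emb_row[OF es(1), of "(r,j0)" "(a,b)"] emb_range[OF es(1) that(1)] that e es(2) by (auto simp: cells_def)
  have td: "i < fst (\<phi>t (a,b)) \<and> fst (\<phi>t (a,b)) \<le> m" if "(a,b) \<in> cells k l" "r < a" for a b
    using emb_row[OF et(1), of "(r,j0)" "(a,b)"] emb_range[OF et(1) that(1)] that e et(2) by (auto simp: cells_def)
  have smono: "fst (\<phi>s (a,b)) < fst (\<phi>s (a',b'))" if "(a,b) \<in> cells k l" "(a',b') \<in> cells k l" "a < a'" for a b a' b'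
    using emb_row[OF es(1), of "(a,b)" "(a',b')"] that by auto
  have tmono: "fst (\<phi>t (a,b)) < fst (\<phi>t (a',b'))" if "(a,b) \<in> cells k l" "(a',b') \<in> cells k l" "a < a'" for a b a' b'
    using emb_row[OF et(1), of "(a,b)" "(a',b')"] that by auto
  have Umix1: "1 \<le> mixrow \<phi>s \<phi>t c1 q a b \<and> mixrow \<phi>s \<phi>t c1 q a b < i" if "(a,b) \<in> cells k l" "a < r" for q a b
    using mixrow_cases[of \<phi>s \<phi>t c1 q a b] su[OF that] tu[OF that] by auto
  have Umix2: "mixrow \<phi>s \<phi>t c1 q a b < mixrow \<phi>s \<phi>t c1 q a' b'"
    if "(a,b) \<in> cells k l" "(a',b') \<in> cells k l" "a < a'" for q a b a' b'
    using mixrow_mono[OF smono[OF that] tmono[OF that] that(3)] .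
  have Dmix1: "i < mixrow \<phi>s \<phi>t c1 q a b \<and> mixrow \<phi>s \<phi>t c1 q a b \<le> m" if "(a,b) \<in> cells k l" "r < a" for q a b
    using mixrow_cases[of \<phi>s \<phi>t c1 q a b] sd[OF that] td[OF that] by auto
  from types consider (T1) r1 r2 where
      "\<forall>(i,j)\<in>cells k l. P i j \<and> i < r \<longrightarrow> i = r1" "\<forall>(i,j)\<in>cells k l. P i j \<and> r < i \<longrightarrow> i = r2"
    | (T2) r1 where "\<forall>(i,j)\<in>cells k l. P i j \<and> i < r \<longrightarrow> i = r1" "\<forall>(i,j)\<in>cells k l. P i j \<and> r < i \<longrightarrow> c2 \<le> j"
    | (T3) "\<forall>(i,j)\<in>cells k l. P i j \<and> i < r \<longrightarrow> j \<le> c1" "\<forall>(i,j)\<in>cells k l. P i j \<and> r < i \<longrightarrow> c2 \<le> j"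
    by blast
  then show ?thesis
  proof cases
    case T1
    show ?thesis
    proof (rule C[where U = "mixrow \<phi>s \<phi>t c1 r1" and D = "mixrow \<phi>s \<phi>t c1 r2"])
      fix a b assume "(a,b) \<in> cells k l" "P a b" "a < r"
      then have "a = r1" using T1(1) by auto
      then show "(b \<le> c1 \<longrightarrow> mixrow \<phi>s \<phi>t c1 r1 a b = fst (\<phi>s (a, b))) \<and> (c2 \<le> b \<longrightarrow> mixrow \<phi>s \<phi>t c1 r1 a b = fst (\<phi>t (a, b)))"
        using mixrow_q[OF c] by blast
    next
      fix a b assume "(a,b) \<in> cells k l" "P a b" "r < a"
      then have "a = r2" using T1(2) by auto
      then show "(b \<le> c1 \<longrightarrow> mixrow \<phi>s \<phi>t c1 r2 a b = fst (\<phi>s (a, b))) \<and> (c2 \<le> b \<longrightarrow> mixrow \<phi>s \<phi>t c1 r2 a b = fst (\<phi>t (a, b)))"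
        using mixrow_q[OF c] by blast
    qed (use Umix1 Umix2 Dmix1 in auto)
  next
    case T2
    show ?thesis
    proof (rule C[where U = "mixrow \<phi>s \<phi>t c1 r1" and D = "\<lambda>a b. fst (\<phi>t (a,b))"])
      fix a b assume "(a,b) \<in> cells k l" "P a b" "a < r"
      then have "a = r1" using T2(1) by auto
      then show "(b \<le> c1 \<longrightarrow> mixrow \<phi>s \<phi>t c1 r1 a b = fst (\<phi>s (a, b))) \<and> (c2 \<le> b \<longrightarrow> mixrow \<phi>s \<phi>t c1 r1 a b = fst (\<phi>t (a, b)))"
        using mixrow_q[OF c] by blast
    next
      fix a b assume "(a,b) \<in> cells k l" "P a b" "r < a"
      then have "c2 \<le> b" using T2(2) by auto
      then show "(b \<le> c1 \<longrightarrow> fst (\<phi>t (a,b)) = fst (\<phi>s (a, b))) \<and> (c2 \<le> b \<longrightarrow> fst (\<phi>t (a,b)) = fst (\<phi>t (a, b)))"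
        using c by auto
    qed (use Umix1 Umix2 td tmono in auto)
  next
    case T3
    show ?thesis
    proof (rule C[where U = "\<lambda>a b. fst (\<phi>s (a,b))" and D = "\<lambda>a b. fst (\<phi>t (a,b))"])
      fix a b assume "(a,b) \<in> cells k l" "P a b" "a < r"
      then have "b \<le> c1" using T3(1) by auto
      then show "(b \<le> c1 \<longrightarrow> fst (\<phi>s (a,b)) = fst (\<phi>s (a, b))) \<and> (c2 \<le> b \<longrightarrow> fst (\<phi>s (a,b)) = fst (\<phi>t (a, b)))"
        using c by auto
    next
      fix a b assume "(a,b) \<in> cells k l" "P a b" "r < a"
      then have "c2 \<le> b" using T3(2) by auto
      then show "(b \<le> c1 \<longrightarrow> fst (\<phi>t (a,b)) = fst (\<phi>s (a, b))) \<and> (c2 \<le> b \<longrightarrow> fst (\<phi>t (a,b)) = fst (\<phi>t (a, b)))"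
        using c by auto
    qed (use su smono td tmono in auto)
  qed
qed


theorem lemma3p10:
  fixes P :: bmat and k l r c1 c2 :: nat
  assumes r: "1 \<le> r" "r \<le> k"
    and c: "1 \<le> c1" "c1 < c2" "c2 \<le> l"
    and row_r: "\<forall>j\<in>{1..l}. P r j \<longrightarrow> c1 \<le> j \<and> j \<le> c2"
    and mid_cols: "\<forall>i\<in>{1..k}. \<forall>c\<in>{c1<..<c2}. P i c \<longrightarrow> i = r"
    and types:
      "(\<exists>r1 r2. (\<forall>(i,j)\<in>cells k l. P i j \<and> i < r \<longrightarrow> i = r1) \<and>
                (\<forall>(i,j)\<in>cells k l. P i j \<and> r < i \<longrightarrow> i = r2))
       \<or> (\<exists>r1. (\<forall>(i,j)\<in>cells k l. P i j \<and> i < r \<longrightarrow> i = r1) \<and>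
                (\<forall>(i,j)\<in>cells k l. P i j \<and> r < i \<longrightarrow> c2 \<le> j))
       \<or> ((\<forall>(i,j)\<in>cells k l. P i j \<and> i < r \<longrightarrow> j \<le> c1) \<and>
          (\<forall>(i,j)\<in>cells k l. P i j \<and> r < i \<longrightarrow> c2 \<le> j))"
  shows "\<forall>j\<in>{c1..c2}. P r j \<longrightarrow> row_bounding P k l (r, j)"
proof (intro ballI impI)
  fix j0 assume j0: "j0 \<in> {c1..c2}" and Pr: "P r j0"
  have e: "(r,j0) \<in> cells k l" using r c j0 by (auto simp: cells_def)
  show "row_bounding P k l (r, j0)"
    unfolding row_bounding_def
  proof (rule exI[of _ l], intro allI impI ballI)
    fix M m n i assume av: "avoids P k l M m n" and i: "i \<in> {1..m}"
    define CR where "CR = critical_runs P k l (r,j0) M m n i"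
    show "card (critical_runs P k l (r,j0) M m n i) \<le> l"
    proof (rule ccontr)
      assume "\<not> ?thesis"
      then have big: "l < card CR" unfolding CR_def by simp
      have CRsub: "CR \<subseteq> {1..n} \<times> {1..n}"
        unfolding CR_def critical_runs_def zero_run_def by auto
      have fin: "finite CR" using finite_subset[OF CRsub] by simp
      have ne: "CR \<noteq> {}" using big by auto
      have memD: "zero_run M m n i a b \<and> (\<exists>j\<in>{a..b}. critical P k l (r,j0) M m n (i,j))" if "(a,b) \<in> CR" for a b
        using that unfolding CR_def critical_runs_def by auto
      define a0 where "a0 = Min (fst ` CR)"
      define a1 where "a1 = Max (fst ` CR)"
      have "a0 \<in> fst ` CR" unfolding a0_def using fin ne by auto
      then obtain b0 where p0: "(a0,b0) \<in> CR" by auto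
      have "a1 \<in> fst ` CR" unfolding a1_def using fin ne by auto
      then obtain b1 where p1: "(a1,b1) \<in> CR" by auto
      have a0min: "a0 \<le> a" if "(a,b) \<in> CR" for a b unfolding a0_def using fin that
        by (metis Min_le finite_imageI fst_conv image_eqI)
      have a1max: "a \<le> a1" if "(a,b) \<in> CR" for a b unfolding a1_def using fin that
        by (metis Max_ge finite_imageI fst_conv image_eqI)
      obtain xs where xs: "xs \<in> {a0..b0}" "critical P k l (r,j0) M m n (i,xs)" using memD[OF p0] by auto
      obtain xt where xt: "xt \<in> {a1..b1}" "critical P k l (r,j0) M m n (i,xt)" using memD[OF p1] by auto
      obtain \<phi>s where es: "is_embedding P k l (flip M (i,xs)) m n \<phi>s" "\<phi>s (r,j0) = (i,xs)"
        using xs(2) unfolding critical_def by auto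
      obtain \<phi>t where et: "is_embedding P k l (flip M (i,xt)) m n \<phi>t" "\<phi>t (r,j0) = (i,xt)"
        using xt(2) unfolding critical_def by auto
      define S where "S = {y. xs < y \<and> y < xt \<and> M i y \<and> 1 \<le> y \<and> y \<le> n}"
      have finS: "finite S" unfolding S_def by (rule finite_subset[of _ "{1..n}"]) auto
      have inj: "inj_on (\<lambda>p. snd p + 1) (CR - {(a1,b1)})"
      proof (rule inj_onI)
        fix p q assume pq: "p \<in> CR - {(a1,b1)}" "q \<in> CR - {(a1,b1)}" "snd p + 1 = snd q + 1"
        obtain a b a' b' where ab: "p = (a,b)" "q = (a',b')" by fastforce
        have z: "zero_run M m n i a b" "zero_run M m n i a' b'" using memD pq ab by auto
        have zz: "a \<le> b" "a' \<le> b'" using z unfolding zero_run_def by auto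
        have "b = b'" using pq ab by simp
        moreover have "a = a'"
        proof (rule ccontr)
          assume "a \<noteq> a'"
          then consider "a < a'" | "a' < a" by linarith
          then show False
          proof cases
            case 1 then show ?thesis using zr_order[OF z 1] zz \<open>b = b'\<close> by linarith
          next
            case 2 then show ?thesis using zr_order[OF z(2) z(1) 2] zz \<open>b = b'\<close> by linarith
          qed
        qed
        ultimately show "p = q" using ab by simp
      qed
      have img: "(\<lambda>p. snd p + 1) ` (CR - {(a1,b1)}) \<subseteq> S"
      proof
        fix y assume "y \<in> (\<lambda>p. snd p + 1) ` (CR - {(a1,b1)})"
        then obtain a b where ab: "(a,b) \<in> CR" "(a,b) \<noteq> (a1,b1)" "y = b + 1" by force
        have z: "zero_run M m n i a b" using memD ab by auto
        have z1: "zero_run M m n i a1 b1" using memD p1 by auto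
        have z0: "zero_run M m n i a0 b0" using memD p0 by auto
        have "a \<noteq> a1" using zr_uniq[OF z] z1 ab(2) by auto
        then have aa1: "a < a1" using a1max[OF ab(1)] by auto
        have o1: "b + 1 < a1 \<and> M i (b+1)" using zr_order[OF z z1 aa1] .
        have "xs < b + 1"
        proof (cases "a0 = a")
          case True then show ?thesis using zr_uniq[OF z0] z xs(1) by auto
        next
          case False
          then have "a0 < a" using a0min[OF ab(1)] by auto
          then show ?thesis using zr_order[OF z0 z] xs(1) z unfolding zero_run_def by auto
        qed
        moreover have "b + 1 \<le> n" using o1 z1 unfolding zero_run_def by auto
        ultimately show "y \<in> S" using o1 xt(1) ab(3) unfolding S_def by auto
      qed
      have "card (CR - {(a1,b1)}) \<le> card S" using card_inj_on_le[OF inj img finS] .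
      moreover have "card (CR - {(a1,b1)}) = card CR - 1" using p1 fin by simp
      ultimately have cardS: "c2 - c1 + 1 \<le> card S" using big c by linarith
      obtain ys where ys: "sorted_wrt (<) ys" "set ys = S"
        using ex1_sorted_list_for_set_if_finite[OF finS] by blast
      have lys: "length ys = card S" using ys by (metis distinct_card strict_sorted_iff)
      define Y where "Y b = ys ! (b - c1)" for b
      have YS: "Y b \<in> S" if "c1 \<le> b" "b \<le> c2" for b
        unfolding Y_def using that lys cardS ys(2) nth_mem[of "b - c1" ys] by auto
      have Y1: "M i (Y b) \<and> 1 \<le> Y b \<and> Y b \<le> n" if "c1 \<le> b" "b \<le> c2" for b
        using YS[OF that] unfolding S_def by auto
      have Ymono: "Y b < Y b'" if "c1 \<le> b" "b < b'" "b' \<le> c2" for b b'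
        unfolding Y_def using sorted_wrt_nth_less[OF ys(1), of "b - c1" "b' - c1"] that lys cardS by auto
      have crs: "\<not> M i xs" using xs(2) unfolding critical_def by auto
      have A1: "snd (\<phi>s (a,b)) < Y c1" if "(a,b) \<in> cells k l" "b \<le> j0" for a b
        using gap_right[OF es(1) e es(2) av, of "Y c1"] Y1[of c1] YS[of c1] c that unfolding S_def by auto
      have A2: "Y c2 < snd (\<phi>t (a,b))" if "(a,b) \<in> cells k l" "j0 \<le> b" for a b
        using gap_left[OF et(1) e et(2) av, of "Y c2"] Y1[of c2] YS[of c2] c that unfolding S_def by auto
      have jj: "c1 \<le> j0" "j0 \<le> c2" using j0 by auto
      obtain \<psi> where "is_embedding P k l M m n \<psi>"
        using combine[OF c(2) jj row_r mid_cols types es et e Y1 Ymono A1 A2] by blast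
      then show False using av unfolding avoids_def by blast
    qed
  qed
qed

end
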